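(* Let $G=(S,C,H)$ be a spider graph with weight $r$ (thin with $r\ge2$, or thick with $r\ge3$) and let $T_H$ be an MDNS of $G[H]$. Then $\tilde\gamma_{gr}^{\times 2}(G)=\tilde\gamma_{gr}^{\times 2}(G[C\cup S])+\tilde\gamma_{gr}^{\times 2}(G[H])$. Moreover, if $G$ is thin, $T_H\oplus(c_1,\dots,c_r,s_1,\dots,s_r)$ is an MDNS of $G$, and if $G$ is thick, $T_H\oplus(s_1,\dots,s_r,c_1,c_2)$ is an MDNS of $G$.
   Context: Graphs are finite, simple, undirected; $N[v]$ is the closed neighborhood. A sequence of distinct vertices $(v_1,\dots,v_k)$ is a double neighborhood sequence (DNS) if for each $i$ some $u\in N[v_i]$ satisfies $|\{j<i:u\in N[v_j]\}|\le 1$; an MDNS is a DNS of maximum length and $\tilde\gamma_{gr}^{\times 2}$ is that length. For the graph with no vertices, the MDNS is the empty sequence and $\tilde\gamma_{gr}^{\times 2}=0$. $\oplus$ denotes concatenation of sequences. A spider graph $G=(S,C,H)$: $V(G)$ is partitioned into $S=\{s_1,\dots,s_r\}$ (stable), $C=\{c_1,\dots,c_r\}$ (clique), $H$ (possibly empty, arbitrary edges inside), $r\ge2$, every vertex of $C$ adjacent to every vertex of $H$, no edges between $H$ and $S$; it is thin if $s_i c_j\in E$ iff $i=j$, thick if $s_ic_j\in E$ iff $i\neq j$. $r$ is the weight. *)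

theory Defs
  imports Main
begin

definition graph :: "'a set \<Rightarrow> ('a \<Rightarrow> 'a \<Rightarrow> bool) \<Rightarrow> bool" where
  "graph V E \<longleftrightarrow> finite V \<and> (\<forall>u v. E u v \<longrightarrow> u \<in> V \<and> v \<in> V \<and> u \<noteq> v \<and> E v u)"

definition cnbhd :: "'a set \<Rightarrow> ('a \<Rightarrow> 'a \<Rightarrow> bool) \<Rightarrow> 'a \<Rightarrow> 'a set" where
  "cnbhd X E v = {u \<in> X. u = v \<or> E v u}"

definition is_dns :: "'a set \<Rightarrow> ('a \<Rightarrow> 'a \<Rightarrow> bool) \<Rightarrow> 'a list \<Rightarrow> bool" where
  "is_dns X E vs \<longleftrightarrow> distinct vs \<and> set vs \<subseteq> X \<and>
     (\<forall>i < length vs. \<exists>u \<in> cnbhd X E (vs ! i).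
        card {j. j < i \<and> u \<in> cnbhd X E (vs ! j)} \<le> 1)"

definition is_mdns :: "'a set \<Rightarrow> ('a \<Rightarrow> 'a \<Rightarrow> bool) \<Rightarrow> 'a list \<Rightarrow> bool" where
  "is_mdns X E vs \<longleftrightarrow> is_dns X E vs \<and> (\<forall>ws. is_dns X E ws \<longrightarrow> length ws \<le> length vs)"

definition gamma_dns :: "'a set \<Rightarrow> ('a \<Rightarrow> 'a \<Rightarrow> bool) \<Rightarrow> nat" where
  "gamma_dns X E = Max (length ` {vs. is_dns X E vs})"

definition spider :: "'a set \<Rightarrow> ('a \<Rightarrow> 'a \<Rightarrow> bool) \<Rightarrow> nat \<Rightarrow> (nat \<Rightarrow> 'a) \<Rightarrow> (nat \<Rightarrow> 'a) \<Rightarrow> 'a set \<Rightarrow> bool" where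
  "spider V E r s c H \<longleftrightarrow> graph V E \<and> r \<ge> 2 \<and>
     inj_on s {1..r} \<and> inj_on c {1..r} \<and>
     s ` {1..r} \<inter> c ` {1..r} = {} \<and> s ` {1..r} \<inter> H = {} \<and> c ` {1..r} \<inter> H = {} \<and>
     V = s ` {1..r} \<union> c ` {1..r} \<union> H \<and>
     (\<forall>i\<in>{1..r}. \<forall>j\<in>{1..r}. \<not> E (s i) (s j)) \<and>
     (\<forall>i\<in>{1..r}. \<forall>j\<in>{1..r}. i \<noteq> j \<longrightarrow> E (c i) (c j)) \<and>
     (\<forall>i\<in>{1..r}. \<forall>h\<in>H. E (c i) h) \<and>
     (\<forall>i\<in>{1..r}. \<forall>h\<in>H. \<not> E (s i) h)"

definition thin_spider where
  "thin_spider V E r s c H \<longleftrightarrow> spider V E r s c H \<and>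
     (\<forall>i\<in>{1..r}. \<forall>j\<in>{1..r}. E (s i) (c j) \<longleftrightarrow> i = j)"

definition thick_spider where
  "thick_spider V E r s c H \<longleftrightarrow> spider V E r s c H \<and>
     (\<forall>i\<in>{1..r}. \<forall>j\<in>{1..r}. E (s i) (c j) \<longleftrightarrow> i \<noteq> j)"

end

theory Submission
  imports Defs
begin

definition okv :: "'a set \<Rightarrow> ('a \<Rightarrow> 'a \<Rightarrow> bool) \<Rightarrow> 'a list \<Rightarrow> 'a \<Rightarrow> bool" where
  "okv X E P v \<longleftrightarrow> (\<exists>u\<in>cnbhd X E v. card {w \<in> set P. u \<in> cnbhd X E w} \<le> 1)"

lemma card_idx:
  assumes "distinct vs" "i \<le> length vs"
  shows "card {j. j < i \<and> Q (vs!j)} = card {w \<in> set (take i vs). Q w}"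
proof -
  have "{w \<in> set (take i vs). Q w} = (!) vs ` {j. j < i \<and> Q (vs!j)}"
    using assms(2) by (auto simp: in_set_conv_nth nth_take)
  moreover have "inj_on ((!) vs) {j. j < i \<and> Q (vs!j)}"
    by (rule inj_on_nth) (use assms in auto)
  ultimately show ?thesis by (simp add: card_image)
qed

lemma dns_iff:
  "is_dns X E vs \<longleftrightarrow> distinct vs \<and> set vs \<subseteq> X \<and> (\<forall>i<length vs. okv X E (take i vs) (vs!i))"
proof (cases "distinct vs")
  case False
  then show ?thesis by (simp add: is_dns_def)
next
  case True
  have key: "card {j. j < i \<and> u \<in> cnbhd X E (vs!j)} = card {w \<in> set (take i vs). u \<in> cnbhd X E w}"
    if "i < length vs" for i u using card_idx[OF True, of i] that by simp
  have "\<forall>i<length vs. ((\<exists>u\<in>cnbhd X E (vs!i). card {j. j < i \<and> u \<in> cnbhd X E (vs!j)} \<le> 1)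
      \<longleftrightarrow> okv X E (take i vs) (vs!i))"
    using key by (simp add: okv_def)
  then show ?thesis unfolding is_dns_def using True by blast
qed

lemma dns_Nil: "is_dns X E []"
  by (simp add: is_dns_def)

lemma dns_snoc:
  "is_dns X E (ys @ [v]) \<longleftrightarrow> is_dns X E ys \<and> v \<notin> set ys \<and> v \<in> X \<and> okv X E ys v"
proof -
  have "(\<forall>i<length (ys @ [v]). okv X E (take i (ys @ [v])) ((ys @ [v])!i)) \<longleftrightarrow>
        (\<forall>i<length ys. okv X E (take i ys) (ys!i)) \<and> okv X E ys v"
    by (auto simp: nth_append less_Suc_eq)
  then show ?thesis unfolding dns_iff by auto
qed

lemma ok_card:
  assumes "card {w \<in> set P. u \<in> cnbhd X E w} \<le> 1" "A \<subseteq> set P" "\<forall>w\<in>A. u \<in> cnbhd X E w"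
  shows "card A \<le> 1"
proof -
  have "card A \<le> card {w \<in> set P. u \<in> cnbhd X E w}"
    by (rule card_mono) (use assms in auto)
  then show ?thesis using assms by simp
qed

lemma mdns_gamma:
  assumes "is_mdns X E vs" shows "gamma_dns X E = length vs"
proof -
  have "finite (length ` {vs. is_dns X E vs})"
    by (rule finite_subset[of _ "{..length vs}"]) (use assms in \<open>auto simp: is_mdns_def\<close>)
  then show ?thesis unfolding gamma_dns_def
    by (rule Max_eqI) (use assms in \<open>auto simp: is_mdns_def\<close>)
qed


locale spid =
  fixes X :: "'a set" and E :: "'a \<Rightarrow> 'a \<Rightarrow> bool" and r :: nat
    and s c :: "nat \<Rightarrow> 'a" and H :: "'a set"
  assumes sym: "\<And>u v. E u v \<Longrightarrow> E v u"
    and r2: "r \<ge> 2" and injs: "inj_on s {1..r}" and injc: "inj_on c {1..r}"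
    and dSC: "s ` {1..r} \<inter> c ` {1..r} = {}" and dSH: "s ` {1..r} \<inter> H = {}"
    and dCH: "c ` {1..r} \<inter> H = {}"
    and Xeq: "X = s ` {1..r} \<union> c ` {1..r} \<union> H"
    and stab: "\<forall>i\<in>{1..r}. \<forall>j\<in>{1..r}. \<not> E (s i) (s j)"
    and cliq: "\<forall>i\<in>{1..r}. \<forall>j\<in>{1..r}. i \<noteq> j \<longrightarrow> E (c i) (c j)"
    and CH: "\<forall>i\<in>{1..r}. \<forall>h\<in>H. E (c i) h"
    and SH: "\<forall>i\<in>{1..r}. \<forall>h\<in>H. \<not> E (s i) h"
begin

lemma nb: "u \<in> cnbhd X E w \<longleftrightarrow> u \<in> X \<and> (u = w \<or> E w u)"
  by (simp add: cnbhd_def)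

lemma N1: "u \<in> c ` {1..r} \<Longrightarrow> w \<in> c ` {1..r} \<Longrightarrow> u \<in> cnbhd X E w"
  using cliq unfolding cnbhd_def Xeq by auto

lemma N2: "u \<in> H \<Longrightarrow> w \<in> c ` {1..r} \<Longrightarrow> u \<in> cnbhd X E w"
  using CH unfolding cnbhd_def Xeq by auto

lemma N4: "u \<in> c ` {1..r} \<Longrightarrow> w \<in> H \<Longrightarrow> u \<in> cnbhd X E w"
  using CH sym unfolding cnbhd_def Xeq by blast

lemma W1: "v \<in> H \<Longrightarrow> u \<in> cnbhd X E v \<Longrightarrow> u \<in> H \<or> u \<in> c ` {1..r}"
  using SH sym dSH unfolding cnbhd_def Xeq by blast

lemma W2: "j \<in> {1..r} \<Longrightarrow> u \<in> cnbhd X E (s j) \<Longrightarrow> u = s j \<or> u \<in> c ` {1..r}"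
  using SH stab sym unfolding cnbhd_def Xeq by blast

lemma filterH: "is_dns X E W \<Longrightarrow> is_dns H E (filter (\<lambda>x. x \<in> H) W)"
proof (induction W rule: rev_induct)
  case Nil
  then show ?case by (simp add: dns_Nil)
next
  case (snoc v W)
  then have dW: "is_dns X E W" and vW: "v \<notin> set W" and vX: "v \<in> X" and ok: "okv X E W v"
    by (auto simp: dns_snoc)
  have IH: "is_dns H E (filter (\<lambda>x. x \<in> H) W)" using snoc.IH dW .
  show ?case
  proof (cases "v \<in> H")
    case False
    then show ?thesis using IH by simp
  next
    case True
    from ok obtain u where u: "u \<in> cnbhd X E v" and cu: "card {w \<in> set W. u \<in> cnbhd X E w} \<le> 1"
      unfolding okv_def by blast
    have "okv H E (filter (\<lambda>x. x \<in> H) W) v"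
    proof (cases "u \<in> H")
      case True
      have uH: "u \<in> cnbhd H E v" using u True by (auto simp: cnbhd_def)
      have "card {w \<in> set (filter (\<lambda>x. x \<in> H) W). u \<in> cnbhd H E w} \<le> 1"
        by (rule ok_card[OF cu]) (auto simp: cnbhd_def Xeq)
      then show ?thesis unfolding okv_def using uH by blast
    next
      case False
      then have uC: "u \<in> c ` {1..r}" using W1[OF \<open>v \<in> H\<close> u] by blast
      have c1: "card (set (filter (\<lambda>x. x \<in> H) W)) \<le> 1"
        by (rule ok_card[OF cu]) (use N4[OF uC] in auto)
      have vv: "v \<in> cnbhd H E v" using \<open>v \<in> H\<close> by (simp add: cnbhd_def)
      have "card {w \<in> set (filter (\<lambda>x. x \<in> H) W). v \<in> cnbhd H E w} \<le> 1"
        by (rule le_trans[OF card_mono c1]) auto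
      then show ?thesis unfolding okv_def using vv by blast
    qed
    then show ?thesis using IH True vW by (simp add: dns_snoc)
  qed
qed

lemma TH_lift: "is_dns H E T \<Longrightarrow> is_dns X E T"
proof (induction T rule: rev_induct)
  case Nil
  then show ?case by (simp add: dns_Nil)
next
  case (snoc v T)
  then have d: "is_dns H E T" and vT: "v \<notin> set T" and vH: "v \<in> H" and ok: "okv H E T v"
    by (auto simp: dns_snoc)
  have TH: "set T \<subseteq> H" using d by (simp add: is_dns_def)
  from ok obtain u where u: "u \<in> cnbhd H E v" and cu: "card {w \<in> set T. u \<in> cnbhd H E w} \<le> 1"
    unfolding okv_def by blast
  have "{w \<in> set T. u \<in> cnbhd X E w} = {w \<in> set T. u \<in> cnbhd H E w}"
    using u TH by (auto simp: cnbhd_def Xeq)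
  then have cu2: "card {w \<in> set T. u \<in> cnbhd X E w} \<le> 1" using cu by simp
  have "u \<in> cnbhd X E v" using u by (auto simp: cnbhd_def Xeq)
  then have "okv X E T v" using cu2 unfolding okv_def by blast
  then show ?case using snoc.IH d vT vH by (simp add: dns_snoc Xeq)
qed

lemma upper_gen:
  assumes "is_dns X E W" "is_mdns H E TH"
  shows "length W \<le> length TH + card (set W - H)"
proof -
  have dist: "distinct W" using assms(1) by (simp add: is_dns_def)
  have "length (filter (\<lambda>x. x \<in> H) W) \<le> length TH"
    using filterH[OF assms(1)] assms(2) by (simp add: is_mdns_def)
  moreover have "length (filter (\<lambda>x. x \<in> H) W) = card (set W \<inter> H)"
    using dist distinct_card[of "filter (\<lambda>x. x \<in> H) W"] by (simp add: Int_def conj_commute)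
  moreover have "length W = card (set W \<inter> H) + card (set W - H)"
    using dist distinct_card[of W] card_Int_Diff[of "set W" H] by simp
  ultimately show ?thesis by simp
qed

end


locale thin_sp = spid +
  assumes thin: "\<forall>i\<in>{1..r}. \<forall>j\<in>{1..r}. E (s i) (c j) \<longleftrightarrow> i = j"
begin

lemma thin_c:
  assumes T: "is_dns H E TH" shows "k \<le> r \<Longrightarrow> is_dns X E (TH @ map c [1..<k+1])"
proof (induction k)
  case 0
  then show ?case using TH_lift[OF T] by simp
next
  case (Suc k)
  have TH: "set TH \<subseteq> H" using T by (simp add: is_dns_def)
  have k1: "Suc k \<in> {1..r}" using Suc.prems by simp
  have IH: "is_dns X E (TH @ map c [1..<k+1])" using Suc by simp
  have n1: "c (Suc k) \<notin> set TH" using TH dCH k1 by blast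
  have n2: "c (Suc k) \<notin> c ` {1..<k+1}"
  proof
    assume "c (Suc k) \<in> c ` {1..<k+1}"
    then obtain j where j: "j \<in> {1..<k+1}" "c (Suc k) = c j" by blast
    moreover have "j \<in> {1..r}" using j(1) Suc.prems by simp
    ultimately have "Suc k = j" using inj_onD[OF injc _ k1] by blast
    then show False using j by simp
  qed
  have inX: "c (Suc k) \<in> X" using k1 Xeq by blast
  have sX: "s (Suc k) \<in> X" using k1 Xeq by blast
  have w: "s (Suc k) \<in> cnbhd X E (c (Suc k))"
  proof -
    have "E (s (Suc k)) (c (Suc k))" using thin k1 by blast
    then have "E (c (Suc k)) (s (Suc k))" by (rule sym)
    then show ?thesis using sX by (simp add: cnbhd_def)
  qed
  have emp: "{w \<in> set (TH @ map c [1..<k+1]). s (Suc k) \<in> cnbhd X E w} = {}"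
  proof -
    { fix w assume w1: "w \<in> set (TH @ map c [1..<k+1])" and w2: "s (Suc k) \<in> cnbhd X E w"
      have False
      proof (cases "w \<in> H")
        case True
        then show False using w2 SH k1 dSH sym unfolding cnbhd_def by blast
      next
        case False
        have "w \<in> c ` {1..<k+1}" using w1 \<open>w \<notin> H\<close> TH by (auto simp del: upt_Suc)
        then obtain j where j: "j \<in> {1..<k+1}" "w = c j" by blast
        then have j1: "j \<in> {1..r}" using Suc.prems by auto
        have "s (Suc k) \<noteq> c j" using dSC j1 k1 by blast
        then have "E (c j) (s (Suc k))" using w2 j by (simp add: cnbhd_def)
        then have "E (s (Suc k)) (c j)" using sym by blast
        then have "Suc k = j" using thin j1 k1 by blast
        then show False using j(1) by simp
      qed }
    then show ?thesis by blast
  qed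
  have "okv X E (TH @ map c [1..<k+1]) (c (Suc k))"
  proof -
    have "card {w \<in> set (TH @ map c [1..<k+1]). s (Suc k) \<in> cnbhd X E w} \<le> 1"
      unfolding emp by simp
    then show ?thesis unfolding okv_def using w by blast
  qed
  then have "is_dns X E ((TH @ map c [1..<k+1]) @ [c (Suc k)])"
    using IH n1 n2 inX unfolding dns_snoc by (simp del: upt_Suc)
  moreover have "[1..<Suc k+1] = [1..<k+1] @ [Suc k]" by simp
  ultimately show ?case by (simp del: upt_Suc)
qed

lemma thin_s:
  assumes T: "is_dns H E TH"
  shows "k \<le> r \<Longrightarrow> is_dns X E (TH @ map c [1..<r+1] @ map s [1..<k+1])"
proof (induction k)
  case 0
  then show ?case using thin_c[OF T, of r] by simp
next
  case (Suc k)
  have TH: "set TH \<subseteq> H" using T by (simp add: is_dns_def)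
  have k1: "Suc k \<in> {1..r}" using Suc.prems by simp
  have IH: "is_dns X E (TH @ map c [1..<r+1] @ map s [1..<k+1])" using Suc by simp
  have n1: "s (Suc k) \<notin> set TH" using TH dSH k1 by blast
  have n2: "s (Suc k) \<notin> s ` {1..<k+1}"
  proof
    assume "s (Suc k) \<in> s ` {1..<k+1}"
    then obtain j where j: "j \<in> {1..<k+1}" "s (Suc k) = s j" by blast
    moreover have "j \<in> {1..r}" using j(1) Suc.prems by simp
    ultimately have "Suc k = j" using inj_onD[OF injs _ k1] by blast
    then show False using j by simp
  qed
  have n3: "s (Suc k) \<notin> c ` {1..<r+1}"
  proof -
    have "{1..<r+1} = {1..r}" by auto
    then show ?thesis using dSC k1 by blast
  qed
  have sX: "s (Suc k) \<in> X" using k1 Xeq by blast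
  have w: "s (Suc k) \<in> cnbhd X E (s (Suc k))"
    using sX by (auto simp: cnbhd_def)
  have sub: "{w \<in> set (TH @ map c [1..<r+1] @ map s [1..<k+1]). s (Suc k) \<in> cnbhd X E w}
      \<subseteq> {c (Suc k)}"
  proof -
    { fix w assume w1: "w \<in> set (TH @ map c [1..<r+1] @ map s [1..<k+1])"
        and w2: "s (Suc k) \<in> cnbhd X E w"
      have "w = c (Suc k)"
      proof -
        consider "w \<in> H" | j where "j \<in> {1..r}" "w = c j" | j where "j \<in> {1..<k+1}" "w = s j"
          using w1 TH by fastforce
        then show ?thesis
        proof cases
          case 1
          then show ?thesis using w2 SH k1 dSH sym unfolding cnbhd_def by blast
        next
          case (2 j)
          have "s (Suc k) \<noteq> c j" using dSC 2 k1 by blast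
          then have "E (c j) (s (Suc k))" using w2 2 by (simp add: cnbhd_def)
          then have "E (s (Suc k)) (c j)" using sym by blast
          then have "Suc k = j" using thin 2 k1 by blast
          then show ?thesis using 2 by simp
        next
          case (3 j)
          then have j1: "j \<in> {1..r}" using Suc.prems by auto
          have "s (Suc k) \<noteq> s j" using n2 3 by blast
          then have "E (s j) (s (Suc k))" using w2 3 by (simp add: cnbhd_def)
          then show ?thesis using stab j1 k1 by blast
        qed
      qed }
    then show ?thesis by blast
  qed
  have "card {w \<in> set (TH @ map c [1..<r+1] @ map s [1..<k+1]). s (Suc k) \<in> cnbhd X E w} \<le> 1"
    using card_mono[OF _ sub] by simp
  then have "okv X E (TH @ map c [1..<r+1] @ map s [1..<k+1]) (s (Suc k))"
    unfolding okv_def using w by blast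
  then have "is_dns X E ((TH @ map c [1..<r+1] @ map s [1..<k+1]) @ [s (Suc k)])"
    using IH n1 n2 n3 sX unfolding dns_snoc by (simp del: upt_Suc)
  moreover have "[1..<Suc k+1] = [1..<k+1] @ [Suc k]" by simp
  ultimately show ?case by (simp del: upt_Suc)
qed

lemma thin_mdns:
  assumes T: "is_mdns H E TH"
  shows "is_mdns X E (TH @ map c [1..<r+1] @ map s [1..<r+1])"
proof -
  have d: "is_dns X E (TH @ map c [1..<r+1] @ map s [1..<r+1])"
    using thin_s[of TH r] T by (simp add: is_mdns_def)
  have "length W \<le> length TH + (r + r)" if W: "is_dns X E W" for W
  proof -
    have "card (set W - H) \<le> card (s ` {1..r} \<union> c ` {1..r})"
      by (rule card_mono) (use W in \<open>auto simp: is_dns_def Xeq\<close>)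
    also have "\<dots> \<le> card (s ` {1..r}) + card (c ` {1..r})" by (rule card_Un_le)
    also have "\<dots> \<le> r + r" using card_image_le[of "{1..r}" s] card_image_le[of "{1..r}" c] by simp
    finally show ?thesis using upper_gen[OF W T] by simp
  qed
  then show ?thesis using d unfolding is_mdns_def by (simp del: upt_Suc)
qed

end


locale thick_sp = spid +
  assumes thick: "\<forall>i\<in>{1..r}. \<forall>j\<in>{1..r}. E (s i) (c j) \<longleftrightarrow> i \<noteq> j"
begin

lemma thick_s:
  assumes T: "is_dns H E TH"
  shows "k \<le> r \<Longrightarrow> is_dns X E (TH @ map s [1..<k+1])"
proof (induction k)
  case 0
  then show ?case using TH_lift[OF T] by simp
next
  case (Suc k)
  have TH: "set TH \<subseteq> H" using T by (simp add: is_dns_def)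
  have k1: "Suc k \<in> {1..r}" using Suc.prems by simp
  have IH: "is_dns X E (TH @ map s [1..<k+1])" using Suc by simp
  have n1: "s (Suc k) \<notin> set TH" using TH dSH k1 by blast
  have n2: "s (Suc k) \<notin> s ` {1..<k+1}"
  proof
    assume "s (Suc k) \<in> s ` {1..<k+1}"
    then obtain j where j: "j \<in> {1..<k+1}" "s (Suc k) = s j" by blast
    moreover have "j \<in> {1..r}" using j(1) Suc.prems by simp
    ultimately have "Suc k = j" using inj_onD[OF injs _ k1] by blast
    then show False using j by simp
  qed
  have sX: "s (Suc k) \<in> X" using k1 Xeq by blast
  have w: "s (Suc k) \<in> cnbhd X E (s (Suc k))"
    using sX by (auto simp: cnbhd_def)
  have emp: "{w \<in> set (TH @ map s [1..<k+1]). s (Suc k) \<in> cnbhd X E w} = {}"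
  proof -
    { fix w assume w1: "w \<in> set (TH @ map s [1..<k+1])" and w2: "s (Suc k) \<in> cnbhd X E w"
      have False
      proof (cases "w \<in> H")
        case True
        then show False using w2 SH k1 dSH sym unfolding cnbhd_def by blast
      next
        case False
        have "w \<in> s ` {1..<k+1}" using w1 \<open>w \<notin> H\<close> TH by (auto simp del: upt_Suc)
        then obtain j where j: "j \<in> {1..<k+1}" "w = s j" by blast
        then have j1: "j \<in> {1..r}" using Suc.prems by auto
        have "s (Suc k) \<noteq> s j" using n2 j by blast
        then have "E (s j) (s (Suc k))" using w2 j by (simp add: cnbhd_def)
        then show False using stab j1 k1 by blast
      qed }
    then show ?thesis by blast
  qed
  have "okv X E (TH @ map s [1..<k+1]) (s (Suc k))"
  proof -
    have "card {w \<in> set (TH @ map s [1..<k+1]). s (Suc k) \<in> cnbhd X E w} \<le> 1"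
      unfolding emp by simp
    then show ?thesis unfolding okv_def using w by blast
  qed
  then have "is_dns X E ((TH @ map s [1..<k+1]) @ [s (Suc k)])"
    using IH n1 n2 sX unfolding dns_snoc by (simp del: upt_Suc)
  moreover have "[1..<Suc k+1] = [1..<k+1] @ [Suc k]" by simp
  ultimately show ?case by (simp del: upt_Suc)
qed

lemma thick_valid:
  assumes T: "is_dns H E TH"
  shows "is_dns X E (TH @ map s [1..<r+1] @ [c 1, c 2])"
proof -
  have TH: "set TH \<subseteq> H" using T by (simp add: is_dns_def)
  have i1: "1 \<in> {1..r}" and i2: "2 \<in> {1..r}" using r2 by auto
  let ?P = "TH @ map s [1..<r+1]"
  have P: "is_dns X E ?P" using thick_s[OF T, of r] by simp
  have c12: "c 1 \<noteq> c 2"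
  proof
    assume "c 1 = c 2"
    then have "(1::nat) = 2" using inj_onD[OF injc _ i1 i2] by blast
    then show False by simp
  qed
  have c1X: "c 1 \<in> X" and c2X: "c 2 \<in> X" and s1X: "s 1 \<in> X" and s2X: "s 2 \<in> X"
    using i1 i2 Xeq by blast+
  have setP: "set ?P = set TH \<union> s ` {1..r}" by (auto simp del: upt_Suc)
  have c1C: "c 1 \<in> c ` {1..r}" and c2C: "c 2 \<in> c ` {1..r}" using i1 i2 by blast+
  have c1P: "c 1 \<notin> set ?P" and c2P: "c 2 \<notin> set ?P"
    unfolding setP using TH dCH dSC c1C c2C by blast+
  have w1: "s 2 \<in> cnbhd X E (c 1)"
  proof -
    have "E (s 2) (c 1)" using thick i1 i2 by simp
    then have "E (c 1) (s 2)" by (rule sym)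
    then show ?thesis using s2X by (simp add: cnbhd_def)
  qed
  have sub1: "{w \<in> set ?P. s 2 \<in> cnbhd X E w} \<subseteq> {s 2}"
  proof
    fix w assume w: "w \<in> {w \<in> set ?P. s 2 \<in> cnbhd X E w}"
    show "w \<in> {s 2}"
    proof (cases "w \<in> H")
      case True
      then show ?thesis using w SH i2 dSH sym unfolding cnbhd_def by blast
    next
      case False
      have "w \<in> s ` {1..r}" using w \<open>w \<notin> H\<close> TH setP by blast
      then obtain j where j: "j \<in> {1..r}" "w = s j" by blast
      then show ?thesis using w stab i2 unfolding cnbhd_def by auto
    qed
  qed
  have ok1: "okv X E ?P (c 1)"
  proof -
    have "card {w \<in> set ?P. s 2 \<in> cnbhd X E w} \<le> card {s 2}"
      by (rule card_mono[OF _ sub1]) simp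
    then have "card {w \<in> set ?P. s 2 \<in> cnbhd X E w} \<le> 1" by simp
    then show ?thesis unfolding okv_def using w1 by blast
  qed
  have d1: "is_dns X E (?P @ [c 1])" using P c1P c1X ok1 unfolding dns_snoc by (simp del: upt_Suc)
  have w2: "s 1 \<in> cnbhd X E (c 2)"
  proof -
    have "E (s 1) (c 2)" using thick i1 i2 by simp
    then have "E (c 2) (s 1)" by (rule sym)
    then show ?thesis using s1X by (simp add: cnbhd_def)
  qed
  have sub2: "{w \<in> set (?P @ [c 1]). s 1 \<in> cnbhd X E w} \<subseteq> {s 1}"
  proof
    fix w assume w: "w \<in> {w \<in> set (?P @ [c 1]). s 1 \<in> cnbhd X E w}"
    show "w \<in> {s 1}"
    proof (cases "w = c 1")
      case True
      have "s 1 \<noteq> c 1" using dSC i1 by blast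
      then have "E (c 1) (s 1)" using w True by (simp add: cnbhd_def)
      then have "E (s 1) (c 1)" using sym by blast
      then show ?thesis using thick i1 by blast
    next
      case False
      show ?thesis
      proof (cases "w \<in> H")
        case True
        then show ?thesis using w SH i1 dSH sym unfolding cnbhd_def by blast
      next
        case False
        have "w \<in> set ?P" using w \<open>w \<noteq> c 1\<close> by simp
        then have "w \<in> s ` {1..r}" using \<open>w \<notin> H\<close> TH setP by blast
        then obtain j where j: "j \<in> {1..r}" "w = s j" by blast
        then show ?thesis using w stab i1 unfolding cnbhd_def by auto
      qed
    qed
  qed
  have ok2: "okv X E (?P @ [c 1]) (c 2)"
  proof -
    have "card {w \<in> set (?P @ [c 1]). s 1 \<in> cnbhd X E w} \<le> card {s 1}"
      by (rule card_mono[OF _ sub2]) simp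
    then have "card {w \<in> set (?P @ [c 1]). s 1 \<in> cnbhd X E w} \<le> 1" by simp
    then show ?thesis unfolding okv_def using w2 by blast
  qed
  have "is_dns X E ((?P @ [c 1]) @ [c 2])" using d1 c2P c12 c2X ok2 unfolding dns_snoc by (simp del: upt_Suc)
  then show ?thesis by simp
qed


lemma N3: "j \<in> {1..r} \<Longrightarrow> w \<in> c ` {1..r} \<Longrightarrow> w \<noteq> c j \<Longrightarrow> s j \<in> cnbhd X E w"
  using thick sym unfolding cnbhd_def Xeq by blast

lemma W3: "v \<in> c ` {1..r} \<Longrightarrow> j \<in> {1..r} \<Longrightarrow> s j \<in> cnbhd X E v \<Longrightarrow> v \<noteq> c j"
  using thick sym dSC unfolding cnbhd_def by blast

definition inv :: "'a list \<Rightarrow> bool" where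
  "inv P \<longleftrightarrow> card (set P \<inter> c ` {1..r}) \<le> 2 \<or>
     (card (set P \<inter> c ` {1..r}) = 3 \<and>
      (\<exists>j\<in>{1..r}. s j \<notin> set P \<and> 2 \<le> card (set P \<inter> c ` {1..r} - {c j})))"

lemma inv_all: "is_dns X E P \<Longrightarrow> inv P"
proof (induction P rule: rev_induct)
  case Nil
  then show ?case by (simp add: inv_def)
next
  case (snoc v P)
  let ?C = "c ` {1..r}"
  from snoc.prems have dP: "is_dns X E P" and vP: "v \<notin> set P" and vX: "v \<in> X"
    and ok: "okv X E P v" by (auto simp: dns_snoc)
  have IH: "inv P" using snoc.IH dP .
  from ok obtain u where u: "u \<in> cnbhd X E v" and cu: "card {w \<in> set P. u \<in> cnbhd X E w} \<le> 1"
    unfolding okv_def by blast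
  have fin: "finite (set P \<inter> ?C)" by simp
  define m where "m = card (set P \<inter> ?C)"
  show ?case
  proof (cases "v \<in> ?C")
    case False
    have eqC: "set (P @ [v]) \<inter> ?C = set P \<inter> ?C" using False by auto
    show ?thesis
    proof (cases "m \<le> 2")
      case True
      then show ?thesis using eqC by (simp add: inv_def m_def)
    next
      case False
      then obtain j where j: "j \<in> {1..r}" "s j \<notin> set P" "2 \<le> card (set P \<inter> ?C - {c j})"
        and m3: "m = 3"
        using IH by (auto simp: inv_def m_def)
      have "v \<noteq> s j"
      proof
        assume vs: "v = s j"
        from W2[OF j(1) u[unfolded vs]] show False
        proof
          assume "u = s j"
          then have "card (set P \<inter> ?C - {c j}) \<le> 1"
            using ok_card[OF cu, of "set P \<inter> ?C - {c j}"] N3[OF j(1)] by blast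
          then show False using j by simp
        next
          assume "u \<in> ?C"
          then have "card (set P \<inter> ?C) \<le> 1"
            using ok_card[OF cu, of "set P \<inter> ?C"] N1 by blast
          then show False using m3 m_def by simp
        qed
      qed
      then show ?thesis using eqC j m3 m_def unfolding inv_def by auto
    qed
  next
    case True
    have eqC: "set (P @ [v]) \<inter> ?C = insert v (set P \<inter> ?C)" using True by auto
    have m1: "card (set (P @ [v]) \<inter> ?C) = Suc m" using eqC vP fin m_def by simp
    show ?thesis
    proof (cases "m \<le> 1")
      case True
      then show ?thesis using m1 by (simp add: inv_def)
    next
      case False
      have uX: "u \<in> X" using u by (simp add: cnbhd_def)
      have "u \<notin> ?C \<and> u \<notin> H"
      proof
        show "u \<notin> ?C"
        proof
          assume "u \<in> ?C"
          then have "card (set P \<inter> ?C) \<le> 1"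
            using ok_card[OF cu, of "set P \<inter> ?C"] N1 by blast
          then show False using False m_def by simp
        qed
        show "u \<notin> H"
        proof
          assume "u \<in> H"
          then have "card (set P \<inter> ?C) \<le> 1"
            using ok_card[OF cu, of "set P \<inter> ?C"] N2 by blast
          then show False using False m_def by simp
        qed
      qed
      then obtain j where j: "j \<in> {1..r}" "u = s j" using uX Xeq by auto
      have vj: "v \<noteq> c j" using W3[OF True j(1)] u j by simp
      have dom: "\<forall>w\<in>set P \<inter> ?C - {c j}. s j \<in> cnbhd X E w" using N3[OF j(1)] by blast
      have cd: "card (set P \<inter> ?C - {c j}) \<le> 1"
        using ok_card[OF cu, of "set P \<inter> ?C - {c j}"] dom j by blast
      have cdl: "m - 1 \<le> card (set P \<inter> ?C - {c j})"
        using fin m_def by (simp add: card_Diff_singleton_if)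
      have m2: "m = 2" using cd cdl False by linarith
      then have ge1: "1 \<le> card (set P \<inter> ?C - {c j})" using cdl by simp
      have sjP: "s j \<notin> set P"
      proof
        assume sj: "s j \<in> set P"
        have "insert (s j) (set P \<inter> ?C - {c j}) \<subseteq> set P" using sj by blast
        moreover have "\<forall>w\<in>insert (s j) (set P \<inter> ?C - {c j}). s j \<in> cnbhd X E w"
          using dom Xeq j by (auto simp: cnbhd_def)
        ultimately have "card (insert (s j) (set P \<inter> ?C - {c j})) \<le> 1"
          using ok_card[OF cu] j by blast
        moreover have "s j \<notin> set P \<inter> ?C - {c j}" using dSC j by blast
        moreover have "finite (set P \<inter> ?C - {c j})" by simp
        ultimately have "Suc (card (set P \<inter> ?C - {c j})) \<le> 1"
          by (metis card_insert_disjoint)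
        then show False using ge1 by linarith
      qed
      have "set (P @ [v]) \<inter> ?C - {c j} = insert v (set P \<inter> ?C - {c j})" using eqC vj by auto
      then have "card (set (P @ [v]) \<inter> ?C - {c j}) = Suc (card (set P \<inter> ?C - {c j}))"
        using vP by simp
      then have c2: "2 \<le> card (set (P @ [v]) \<inter> ?C - {c j})" using ge1 by simp
      have "s j \<noteq> v"
      proof
        assume "s j = v"
        then have "s j \<in> s ` {1..r} \<inter> c ` {1..r}" using True j(1) by blast
        then show False using dSC by blast
      qed
      then have "s j \<notin> set (P @ [v])" using sjP by simp
      then show ?thesis using m1 m2 c2 j unfolding inv_def by auto
    qed
  qed
qed

lemma thick_mdns:
  assumes T: "is_mdns H E TH"
  shows "is_mdns X E (TH @ map s [1..<r+1] @ [c 1, c 2])"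
proof -
  have d: "is_dns X E (TH @ map s [1..<r+1] @ [c 1, c 2])"
    using thick_valid T by (simp add: is_mdns_def)
  have "length W \<le> length TH + (r + 2)" if W: "is_dns X E W" for W
  proof -
    let ?C = "c ` {1..r}" and ?S = "s ` {1..r}"
    have I: "inv W" using inv_all W .
    have "card (set W - H) \<le> card (set W \<inter> ?S \<union> set W \<inter> ?C)"
      by (rule card_mono) (use W in \<open>auto simp: is_dns_def Xeq\<close>)
    also have "\<dots> \<le> card (set W \<inter> ?S) + card (set W \<inter> ?C)" by (rule card_Un_le)
    also have "\<dots> \<le> r + 2"
    proof (cases "card (set W \<inter> ?C) \<le> 2")
      case True
      have "card (set W \<inter> ?S) \<le> card ?S" by (rule card_mono) auto
      also have "\<dots> \<le> r" using card_image_le[of "{1..r}" s] by simp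
      finally show ?thesis using True by simp
    next
      case False
      then obtain j where j: "j \<in> {1..r}" "s j \<notin> set W" and m3: "card (set W \<inter> ?C) = 3"
        using I by (auto simp: inv_def)
      have "card (set W \<inter> ?S) \<le> card (?S - {s j})" by (rule card_mono) (use j in auto)
      also have "\<dots> = card ?S - 1" using j by (simp add: card_Diff_singleton_if)
      also have "\<dots> \<le> r - 1" using card_image_le[of "{1..r}" s] by simp
      finally show ?thesis using m3 r2 by simp
    qed
    finally show ?thesis using upper_gen[OF W T] by simp
  qed
  then show ?thesis using d unfolding is_mdns_def by (simp del: upt_Suc)
qed

end


lemma mdns_empty: "is_mdns {} E []"
  unfolding is_mdns_def is_dns_def by auto

lemma spider_spid: "spider V E r s c H \<Longrightarrow> spid V E r s c H"
  unfolding spider_def graph_def spid_def by (elim conjE) (intro conjI; assumption?; blast)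

lemma spider_spid0: "spider V E r s c H \<Longrightarrow> spid (c ` {1..r} \<union> s ` {1..r}) E r s c {}"
  unfolding spider_def graph_def spid_def by (elim conjE) (intro conjI; assumption?; blast)

lemma thin_res:
  assumes "thin_spider V E r s c H" "is_mdns H E TH"
  shows "is_mdns V E (TH @ map c [1..<r+1] @ map s [1..<r+1])"
    and "gamma_dns V E = gamma_dns (c ` {1..r} \<union> s ` {1..r}) E + gamma_dns H E"
proof -
  have sp: "spider V E r s c H" and th: "\<forall>i\<in>{1..r}. \<forall>j\<in>{1..r}. E (s i) (c j) \<longleftrightarrow> i = j"
    using assms(1) by (auto simp: thin_spider_def)
  interpret A: thin_sp V E r s c H
    using spider_spid[OF sp] th by (simp add: thin_sp_def thin_sp_axioms_def)
  interpret B: thin_sp "c ` {1..r} \<union> s ` {1..r}" E r s c "{}"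
    using spider_spid0[OF sp] th by (simp add: thin_sp_def thin_sp_axioms_def)
  show m: "is_mdns V E (TH @ map c [1..<r+1] @ map s [1..<r+1])" using A.thin_mdns assms(2) .
  have m0: "is_mdns (c ` {1..r} \<union> s ` {1..r}) E ([] @ map c [1..<r+1] @ map s [1..<r+1])"
    using B.thin_mdns mdns_empty .
  show "gamma_dns V E = gamma_dns (c ` {1..r} \<union> s ` {1..r}) E + gamma_dns H E"
    using mdns_gamma[OF m] mdns_gamma[OF m0] mdns_gamma[OF assms(2)] by simp
qed

lemma thick_res:
  assumes "thick_spider V E r s c H" "is_mdns H E TH"
  shows "is_mdns V E (TH @ map s [1..<r+1] @ [c 1, c 2])"
    and "gamma_dns V E = gamma_dns (c ` {1..r} \<union> s ` {1..r}) E + gamma_dns H E"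
proof -
  have sp: "spider V E r s c H" and th: "\<forall>i\<in>{1..r}. \<forall>j\<in>{1..r}. E (s i) (c j) \<longleftrightarrow> i \<noteq> j"
    using assms(1) by (auto simp: thick_spider_def)
  interpret A: thick_sp V E r s c H
    using spider_spid[OF sp] th by (simp add: thick_sp_def thick_sp_axioms_def)
  interpret B: thick_sp "c ` {1..r} \<union> s ` {1..r}" E r s c "{}"
    using spider_spid0[OF sp] th by (simp add: thick_sp_def thick_sp_axioms_def)
  show m: "is_mdns V E (TH @ map s [1..<r+1] @ [c 1, c 2])" using A.thick_mdns assms(2) .
  have m0: "is_mdns (c ` {1..r} \<union> s ` {1..r}) E ([] @ map s [1..<r+1] @ [c 1, c 2])"
    using B.thick_mdns mdns_empty .
  show "gamma_dns V E = gamma_dns (c ` {1..r} \<union> s ` {1..r}) E + gamma_dns H E"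
    using mdns_gamma[OF m] mdns_gamma[OF m0] mdns_gamma[OF assms(2)] by simp
qed

theorem proposition8:
  fixes V :: "'a set" and E :: "'a \<Rightarrow> 'a \<Rightarrow> bool" and r :: nat
    and s c :: "nat \<Rightarrow> 'a" and H :: "'a set" and TH :: "'a list"
  assumes "(thin_spider V E r s c H \<and> r \<ge> 2) \<or> (thick_spider V E r s c H \<and> r \<ge> 3)"
    and "is_mdns H E TH"
  shows "gamma_dns V E = gamma_dns (c ` {1..r} \<union> s ` {1..r}) E + gamma_dns H E
    \<and> (thin_spider V E r s c H \<longrightarrow>
         is_mdns V E (TH @ map c [1..<r+1] @ map s [1..<r+1]))
    \<and> (thick_spider V E r s c H \<longrightarrow>
         is_mdns V E (TH @ map s [1..<r+1] @ [c 1, c 2]))"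
proof -
  have g: "gamma_dns V E = gamma_dns (c ` {1..r} \<union> s ` {1..r}) E + gamma_dns H E"
    using assms(1) thin_res(2)[OF _ assms(2)] thick_res(2)[OF _ assms(2)] by blast
  show ?thesis using g thin_res(1)[OF _ assms(2)] thick_res(1)[OF _ assms(2)] by simp
qed

end
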